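(* Let UBEV-S (described in the context) be run for $K$ episodes on a finite-horizon episodic stationary MDP with $S$ states, $A$ actions and horizon $H$. Then $$\sum_{k=1}^K\sum_{t=1}^H\sum_{(s,a)\notin L_k}w_{tk}(s,a)=\tilde O(SAH).$$
   Context: Setting: finite-horizon episodic MDP with finite state set ($S$ states), finite action set ($A$ actions), horizon $H$, stationary transitions and mean rewards in $[0,1]$. UBEV-S is an algorithm (with failure tolerance $\delta\in(0,1]$) that in each episode $k$ plays a policy $\pi_k$ mapping (state, timestep) to actions. $w_{tk}(s,a)$ denotes the probability, in episode $k$ under $\pi_k$, of being in state $s$ at step $t$ and taking action $a$; $w_k(s,a)=\sum_{t\in[H]}w_{tk}(s,a)$. The set $L_k$ is $L_k=\{(s,a)\in\mathcal S\times\mathcal A:\ \frac14\sum_{j\le k}w_j(s,a)\ge H\ln\frac{9SA}{\delta}\}$. $\tilde O(\cdot)$ hides constants and factors polylogarithmic in quantities polynomial in $S,A,T,K,H,1/\delta$. *)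

theory Defs
  imports Complex_Main
begin

text \<open>States are 0..S-1, actions 0..A-1, steps 1..H, episodes 1..K.
  Initial-state distribution p0, transition kernel P s a s' (stationary).
  A (nonstationary) policy pol maps (state, step) to an action.\<close>

definition valid_mdp :: "nat \<Rightarrow> nat \<Rightarrow> (nat \<Rightarrow> real) \<Rightarrow> (nat \<Rightarrow> nat \<Rightarrow> nat \<Rightarrow> real) \<Rightarrow> bool" where
  "valid_mdp S A p0 P \<longleftrightarrow>
     (\<forall>s<S. 0 \<le> p0 s) \<and> (\<Sum>s<S. p0 s) = 1 \<and>
     (\<forall>s<S. \<forall>a<A. (\<forall>s'<S. 0 \<le> P s a s') \<and> (\<Sum>s'<S. P s a s') = 1)"

definition valid_policy :: "nat \<Rightarrow> nat \<Rightarrow> (nat \<Rightarrow> nat \<Rightarrow> nat) \<Rightarrow> bool" where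
  "valid_policy S A pol \<longleftrightarrow> (\<forall>s<S. \<forall>t. pol s t < A)"

text \<open>sdist S p0 P pol n s = probability of being in state s at step n+1.\<close>
fun sdist :: "nat \<Rightarrow> (nat \<Rightarrow> real) \<Rightarrow> (nat \<Rightarrow> nat \<Rightarrow> nat \<Rightarrow> real) \<Rightarrow> (nat \<Rightarrow> nat \<Rightarrow> nat) \<Rightarrow> nat \<Rightarrow> nat \<Rightarrow> real" where
  "sdist S p0 P pol 0 s = p0 s"
| "sdist S p0 P pol (Suc n) s' = (\<Sum>s<S. sdist S p0 P pol n s * P s (pol s (Suc n)) s')"

definition occ_t :: "nat \<Rightarrow> (nat \<Rightarrow> real) \<Rightarrow> (nat \<Rightarrow> nat \<Rightarrow> nat \<Rightarrow> real) \<Rightarrow> (nat \<Rightarrow> nat \<Rightarrow> nat) \<Rightarrow> nat \<Rightarrow> nat \<Rightarrow> nat \<Rightarrow> real" where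
  "occ_t S p0 P pol t s a = (if pol s t = a then sdist S p0 P pol (t - 1) s else 0)"

definition occ :: "nat \<Rightarrow> nat \<Rightarrow> (nat \<Rightarrow> real) \<Rightarrow> (nat \<Rightarrow> nat \<Rightarrow> nat \<Rightarrow> real) \<Rightarrow> (nat \<Rightarrow> nat \<Rightarrow> nat) \<Rightarrow> nat \<Rightarrow> nat \<Rightarrow> real" where
  "occ S H p0 P pol s a = (\<Sum>t=1..H. occ_t S p0 P pol t s a)"

definition known_set :: "nat \<Rightarrow> nat \<Rightarrow> nat \<Rightarrow> real \<Rightarrow> (nat \<Rightarrow> real) \<Rightarrow> (nat \<Rightarrow> nat \<Rightarrow> nat \<Rightarrow> real)
    \<Rightarrow> (nat \<Rightarrow> nat \<Rightarrow> nat \<Rightarrow> nat) \<Rightarrow> nat \<Rightarrow> (nat \<times> nat) set" where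
  "known_set S A H \<delta> p0 P pols k =
     {(s, a). s < S \<and> a < A \<and>
        (1/4) * (\<Sum>j=1..k. occ S H p0 P (pols j) s a) \<ge> real H * ln (9 * real S * real A / \<delta>)}"

end

theory Submission
  imports Defs
begin

lemma sdist_nonneg:
  assumes "valid_mdp S A p0 P" "valid_policy S A pol" "s < S"
  shows "0 \<le> sdist S p0 P pol n s"
  using assms(3)
proof (induction n arbitrary: s)
  case 0
  then show ?case using assms(1) by (simp add: valid_mdp_def)
next
  case (Suc n)
  show ?case
    using Suc assms(1,2) unfolding valid_mdp_def valid_policy_def
    by (auto intro!: sum_nonneg mult_nonneg_nonneg)
qed

lemma occ_nonneg:
  assumes "valid_mdp S A p0 P" "valid_policy S A pol" "s < S"
  shows "0 \<le> occ S H p0 P pol s a"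
  unfolding occ_def occ_t_def
  using sdist_nonneg[OF assms] by (auto intro!: sum_nonneg)

lemma pair_bound:
  fixes f :: "nat \<Rightarrow> real"
  assumes nn: "\<And>k. 0 \<le> f k" and B: "0 \<le> B"
  shows "(\<Sum>k=1..K. if \<not> (B \<le> (1/4) * (\<Sum>j=1..k. f j)) then f k else 0) \<le> 4 * B"
proof -
  define M where "M = {k \<in> {1..K}. \<not> (B \<le> (1/4) * (\<Sum>j=1..k. f j))}"
  have eq: "(\<Sum>k=1..K. if \<not> (B \<le> (1/4) * (\<Sum>j=1..k. f j)) then f k else 0) = sum f M"
    unfolding M_def by (rule sum.inter_filter[symmetric]) simp
  show ?thesis
  proof (cases "M = {}")
    case True
    then show ?thesis using eq B by simp
  next
    case False
    have fin: "finite M" unfolding M_def by simp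
    define k0 where "k0 = Max M"
    have k0M: "k0 \<in> M" using Max_in[OF fin False] k0_def by simp
    have sub: "M \<subseteq> {1..k0}" using Max_ge[OF fin] k0_def M_def by auto
    have "sum f M \<le> sum f {1..k0}" by (rule sum_mono2[OF _ sub]) (auto simp: nn)
    also have "\<dots> < 4 * B" using k0M unfolding M_def by auto
    finally show ?thesis using eq by simp
  qed
qed

lemma num_bound:
  fixes S A H K :: nat and \<delta> :: real
  assumes "S \<ge> 1" "A \<ge> 1" "H \<ge> 1" "K \<ge> 1" "0 < \<delta>" "\<delta> \<le> 1"
  shows "ln (9 * real S * real A / \<delta>) \<le> 5 * ln (exp 1 + real S * real A * real H * real K / \<delta>)"
proof -
  define x where "x = real S * real A * real H * real K / \<delta>"
  have SA: "real S * real A \<ge> 1" using assms by (metis mult_mono of_nat_1 of_nat_le_iff mult_1 zero_le_one of_nat_0_le_iff)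
  have HK: "real H * real K \<ge> 1" using assms by (metis mult_mono of_nat_1 of_nat_le_iff mult_1 zero_le_one of_nat_0_le_iff)
  have "real S * real A / \<delta> \<le> x"
  proof -
    have "real S * real A \<le> real S * real A * (real H * real K)"
      using SA HK by (simp add: mult_le_cancel_left1)
    then show ?thesis unfolding x_def using assms(5) by (simp add: divide_right_mono mult.assoc)
  qed
  have pos: "0 < real S * real A / \<delta>" using SA assms by simp
  have "ln (9 * real S * real A / \<delta>) = ln 9 + ln (real S * real A / \<delta>)"
  proof -
    have "9 * real S * real A / \<delta> = 9 * (real S * real A / \<delta>)" by simp
    then show ?thesis using pos assms ln_mult[of 9 "real S * real A / \<delta>"] by (simp add: mult.assoc)
  qed
  moreover have "ln (9::real) \<le> 4"
  proof -
    have "ln (9::real) = 2 * ln 3" using ln_realpow[of 3 2] by simp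
    moreover have "ln (3::real) \<le> 3 - 1" by (rule ln_le_minus_one) simp
    ultimately show ?thesis by simp
  qed
  moreover have "ln (real S * real A / \<delta>) \<le> ln (exp 1 + x)"
    using pos \<open>real S * real A / \<delta> \<le> x\<close> exp_gt_zero[of 1] by (intro ln_mono) linarith+
  moreover have "1 \<le> ln (exp 1 + x)"
  proof -
    have "x \<ge> 0" using pos \<open>real S * real A / \<delta> \<le> x\<close> by linarith
    then have "exp 1 \<le> exp 1 + x" by simp
    then have "ln (exp 1) \<le> ln (exp 1 + x)" by (intro ln_mono) simp_all
    then show ?thesis by simp
  qed
  ultimately have "ln (9 * real S * real A / \<delta>) \<le> 5 * ln (exp 1 + x)" by linarith
  then show ?thesis unfolding x_def by simp
qed

theorem lemma3:
  shows "\<exists>C::real. \<exists>p::nat. \<forall>S A H K (\<delta>::real) p0 P pols.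
     S \<ge> 1 \<longrightarrow> A \<ge> 1 \<longrightarrow> H \<ge> 1 \<longrightarrow> 0 < \<delta> \<longrightarrow> \<delta> \<le> 1 \<longrightarrow>
     valid_mdp S A p0 P \<longrightarrow> (\<forall>k. valid_policy S A (pols k)) \<longrightarrow>
     (\<Sum>k=1..K. \<Sum>t=1..H. \<Sum>(s, a) \<in> ({..<S} \<times> {..<A}) - known_set S A H \<delta> p0 P pols k.
         occ_t S p0 P (pols k) t s a)
     \<le> C * real S * real A * real H * (ln (exp 1 + real S * real A * real H * real K / \<delta>)) ^ p"
proof (intro exI allI impI)
  fix S A H K :: nat and \<delta> :: real and p0 :: "nat \<Rightarrow> real" and P :: "nat \<Rightarrow> nat \<Rightarrow> nat \<Rightarrow> real" and pols :: "nat \<Rightarrow> nat \<Rightarrow> nat \<Rightarrow> nat"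
  assume S: "S \<ge> 1" and A: "A \<ge> 1" and H: "H \<ge> 1" and d0: "0 < \<delta>" and d1: "\<delta> \<le> 1"
    and mdp: "valid_mdp S A p0 P" and pol: "\<forall>k. valid_policy S A (pols k)"
  define X where "X = {..<S} \<times> {..<A}"
  define L where "L = known_set S A H \<delta> p0 P pols"
  define B where "B = real H * ln (9 * real S * real A / \<delta>)"
  define oc where "oc = (\<lambda>k s a. occ S H p0 P (pols k) s a)"
  have lnpos: "0 \<le> ln (9 * real S * real A / \<delta>)"
  proof -
    have "real S * real A \<ge> 1" using S A by (metis mult_mono of_nat_1 of_nat_le_iff mult_1 zero_le_one of_nat_0_le_iff)
    then have "1 \<le> 9 * real S * real A / \<delta>" using d0 d1 by (simp add: field_simps)
    then show ?thesis by simp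
  qed
  have B0: "0 \<le> B" unfolding B_def using lnpos by simp
  have finX: "finite X" unfolding X_def by simp
  have step1: "(\<Sum>t=1..H. \<Sum>(s, a) \<in> X - L k. occ_t S p0 P (pols k) t s a)
      = (\<Sum>p\<in>X. if p \<notin> L k then oc k (fst p) (snd p) else 0)" for k
  proof -
    have "(\<Sum>t=1..H. \<Sum>(s, a) \<in> X - L k. occ_t S p0 P (pols k) t s a)
        = (\<Sum>p \<in> X - L k. \<Sum>t=1..H. occ_t S p0 P (pols k) t (fst p) (snd p))"
      by (subst sum.swap) (simp add: case_prod_beta)
    also have "\<dots> = (\<Sum>p \<in> X - L k. oc k (fst p) (snd p))"
      unfolding oc_def occ_def by simp
    also have "\<dots> = (\<Sum>p\<in>X. if p \<notin> L k then oc k (fst p) (snd p) else 0)"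
      using finX by (simp add: Diff_eq sum.inter_restrict)
    finally show ?thesis .
  qed
  have LHS: "(\<Sum>k=1..K. \<Sum>t=1..H. \<Sum>(s, a) \<in> X - L k. occ_t S p0 P (pols k) t s a)
      = (\<Sum>p\<in>X. \<Sum>k=1..K. if p \<notin> L k then oc k (fst p) (snd p) else 0)"
    by (simp only: step1) (rule sum.swap)
  have each: "(\<Sum>k=1..K. if p \<notin> L k then oc k (fst p) (snd p) else 0) \<le> 4 * B" if pX: "p \<in> X" for p
  proof -
    obtain s a where p: "p = (s, a)" and s: "s < S" and a: "a < A" using pX X_def by auto
    have "p \<notin> L k \<longleftrightarrow> \<not> (B \<le> (1/4) * (\<Sum>j=1..k. oc j s a))" for k
      unfolding L_def known_set_def B_def oc_def p using s a by auto
    then have "(\<Sum>k=1..K. if p \<notin> L k then oc k (fst p) (snd p) else 0)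
        = (\<Sum>k=1..K. if \<not> (B \<le> (1/4) * (\<Sum>j=1..k. oc j s a)) then oc k s a else 0)"
      unfolding p fst_conv snd_conv by simp
    also have "\<dots> \<le> 4 * B"
      by (rule pair_bound[OF _ B0]) (simp add: oc_def occ_nonneg[OF mdp pol[rule_format] s])
    finally show ?thesis .
  qed
  have "(\<Sum>p\<in>X. \<Sum>k=1..K. if p \<notin> L k then oc k (fst p) (snd p) else 0) \<le> real (card X) * (4 * B)"
    using sum_bounded_above[of X _ "4 * B"] each by auto
  also have "\<dots> = 4 * real S * real A * B" unfolding X_def by (simp add: card_cartesian_product)
  finally have main: "(\<Sum>k=1..K. \<Sum>t=1..H. \<Sum>(s, a) \<in> X - L k. occ_t S p0 P (pols k) t s a)
      \<le> 4 * real S * real A * B" using LHS by simp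
  have lnE: "0 \<le> ln (exp 1 + real S * real A * real H * real K / \<delta>)"
    using d0 by (intro ln_ge_zero) (smt (verit) divide_nonneg_pos exp_ge_add_one_self mult_nonneg_nonneg of_nat_0_le_iff)
  show "(\<Sum>k=1..K. \<Sum>t=1..H. \<Sum>(s, a) \<in> ({..<S} \<times> {..<A}) - known_set S A H \<delta> p0 P pols k.
         occ_t S p0 P (pols k) t s a)
     \<le> 20 * real S * real A * real H * (ln (exp 1 + real S * real A * real H * real K / \<delta>)) ^ 1"
  proof (cases "K = 0")
    case True
    then show ?thesis using lnE by simp
  next
    case False
    then have K: "K \<ge> 1" by simp
    have nb: "ln (9 * real S * real A / \<delta>) \<le> 5 * ln (exp 1 + real S * real A * real H * real K / \<delta>)"
      by (rule num_bound[OF S A H K d0 d1])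
    have SAH: "0 \<le> 4 * real S * real A * real H" by simp
    have "4 * real S * real A * B = (4 * real S * real A * real H) * ln (9 * real S * real A / \<delta>)"
      unfolding B_def by simp
    also have "\<dots> \<le> (4 * real S * real A * real H) * (5 * ln (exp 1 + real S * real A * real H * real K / \<delta>))"
      by (rule mult_left_mono[OF nb SAH])
    also have "\<dots> = 20 * real S * real A * real H * (ln (exp 1 + real S * real A * real H * real K / \<delta>)) ^ 1"
      by simp
    finally have fin: "4 * real S * real A * B \<le> 20 * real S * real A * real H * (ln (exp 1 + real S * real A * real H * real K / \<delta>)) ^ 1" .
    have main': "(\<Sum>k=1..K. \<Sum>t=1..H. \<Sum>(s, a) \<in> ({..<S} \<times> {..<A}) - known_set S A H \<delta> p0 P pols k.
         occ_t S p0 P (pols k) t s a) \<le> 4 * real S * real A * B"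
      using main unfolding X_def L_def .
    show ?thesis by (rule order_trans[OF main' fin])
  qed
qed

end
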